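(* Let $\mathcal{Q}$ be a recourse function with a disaggregation $\{\mathcal{Q}(R,v)\}$ such that there are vectors $w\in\mathbb{Q}^{V_+}_{\ge0}$ and $b\in\mathbb{Z}^{V_+}_{\ge0}$ with the property that for every route $R$ there exists $\bar y_R\in\Pi(R)\cap[\mathbf 0,b]^N$ satisfying $\mathcal{Q}(R,v)\ge\sum_{\xi\in[N]}p_\xi w_v(\bar y_R)^\xi_v$ for all $v\in V_+(R)$. Define $$\mathcal{F}(\mathcal{X},\mathcal{Q})=\Big\{(x,\theta)\in(\mathcal{X}\cap\mathbb{Z}^E)\times\mathbb{R}^{V_+}_{\ge0}:\ \theta_v\ge\sum_{R\in\mathcal{R}(x)}\mathcal{Q}(R,v)\ \forall v\in V_+\Big\}$$ and let $\mathcal{M}$ be the set of triples $(x,\theta,y)$ with $x\in\mathcal{X}\cap\mathbb{Z}^E$, $y\in\Pi(x)\cap[\mathbf 0,b]^N$ and $\theta_v\ge\sum_{\xi\in[N]}p_\xi w_v y^\xi_v$ for all $v\in V_+$. Then $\mathcal{F}(\mathcal{X},\mathcal{Q})\subseteq\{(x,\theta):\exists y \text{ with }(x,\theta,y)\in\mathcal{M}\}$.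
   Context: $G=(V,E)$ is a complete undirected graph with $V=\{0\}\cup V_+$ ($0$ the depot, $V_+$ the customers); $D=(V,A)$ replaces each edge by two opposite arcs. $C\in\mathbb{Q}_{>0}$ is the capacity. Scenarios $\xi\in[N]$ have demand vectors $d^\xi\in\mathbb{Q}^{V_+}_{\ge0}$ and probabilities $p_\xi\ge0$, $\sum_\xi p_\xi=1$; assume $d^\xi(v)\le C$ for all $\xi,v$. $f(S)=\sum_{i\in S}f(i)$; $\bar d=\sum_\xi p_\xi d^\xi$. $\delta(S)$: edges with exactly one endpoint in $S$; $E(S)$: edges with both endpoints in $S$. $\mathcal{X}$ is one of $\mathcal{X}_{\mathrm{sub}}=\{x\in[0,2]^E: x(\delta(v))=2\ \forall v\in V_+,\ x(E(S))\le|S|-1\ \forall\emptyset\ne S\subseteq V_+\}$ or $\mathcal{X}_{\mathrm{cvrp}}=\mathcal{X}_{\mathrm{sub}}\cap\{x: x(\delta(0))=2k,\ x(E(S))\le |S|-\lceil\bar d(S)/C\rceil\ \forall\emptyset\ne S\subseteq V_+\}$ for a given positive integer $k$. A route $R=(v_1,\dots,v_\ell)$ is the cycle $0,v_1,\dots,v_\ell,0$ through distinct customers, $V_+(R)=\{v_1,\dots,v_\ell\}$, $v_0=v_{\ell+1}=0$. Each $x\in\mathcal{X}\cap\mathbb{Z}^E$ encodes a collection of routes $\mathcal{R}(x)$ whose customer sets partition $V_+$. A recourse function $\mathcal{Q}$ maps each route to a nonnegative rational; a disaggregation consists of values $\mathcal{Q}(R,v)$, $v\in V_+$, with $\mathcal{Q}(R)=\sum_{v\in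 V_+(R)}\mathcal{Q}(R,v)$ and $\mathcal{Q}(R,v)=0$ for $v\notin V_+(R)$. Vectors $y\in\mathbb{R}^{[N]\times V_+}$ have entries $y^\xi_v$. For a route $R=(v_1,\dots,v_\ell)$ and $\xi$, $\mathcal{Y}^\xi(R)$ is the set of $y^\xi\in\mathbb{Z}^{V_+}_{\ge0}$ for which there exist $f\in\mathbb{R}^A_{\ge0}$, $g\in\mathbb{R}^{V_+}_{\ge0}$ with $f_{(v_{i-1},v_i)}+d^\xi(v_i)=f_{(v_i,v_{i+1})}+g_{v_i}$ ($i\in[\ell]$), $f_{(v_{i-1},v_i)}\le C$ ($i\in[\ell+1]$), $g_{v_i}\le Cy^\xi_{v_i}$ ($i\in[\ell]$). $\Pi(R)=\mathcal{Y}^1(R)\times\cdots\times\mathcal{Y}^N(R)$; $\Pi(x)=\bigcap_{R\in\mathcal{R}(x)}\Pi(R)$. $[\mathbf 0,b]^N=\{y:0\le y^\xi_v\le b_v\ \forall\xi,v\}$. *)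

theory Defs
  imports Main "HOL.Real"
begin

(* Vertices are naturals; depot = 0, customers V+ = {1..n}, V = {0..n}.
   Scenarios are indexed by {1..N}.  A route is a list of distinct customers. *)

definition edges :: "nat \<Rightarrow> nat set set" where
  "edges n = {e. \<exists>u v. e = {u, v} \<and> u \<le> n \<and> v \<le> n \<and> u \<noteq> v}"

definition delta :: "nat \<Rightarrow> nat set \<Rightarrow> nat set set" where
  "delta n S = {e \<in> edges n. card (e \<inter> S) = 1}"

definition Ein :: "nat \<Rightarrow> nat set \<Rightarrow> nat set set" where
  "Ein n S = {e \<in> edges n. e \<subseteq> S}"

definition Xsub :: "nat \<Rightarrow> (nat set \<Rightarrow> real) set" where
  "Xsub n = {x. (\<forall>e. e \<notin> edges n \<longrightarrow> x e = 0)
     \<and> (\<forall>e\<in>edges n. 0 \<le> x e \<and> x e \<le> 2)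
     \<and> (\<forall>v\<in>{1..n}. sum x (delta n {v}) = 2)
     \<and> (\<forall>S. S \<noteq> {} \<and> S \<subseteq> {1..n} \<longrightarrow> sum x (Ein n S) \<le> real (card S) - 1)}"

definition dbar :: "nat \<Rightarrow> (nat \<Rightarrow> real) \<Rightarrow> (nat \<Rightarrow> nat \<Rightarrow> real) \<Rightarrow> nat \<Rightarrow> real" where
  "dbar N p d v = (\<Sum>\<xi>\<in>{1..N}. p \<xi> * d \<xi> v)"

definition Xcvrp :: "nat \<Rightarrow> real \<Rightarrow> (nat \<Rightarrow> nat \<Rightarrow> real) \<Rightarrow> (nat \<Rightarrow> real) \<Rightarrow> nat \<Rightarrow> nat
    \<Rightarrow> (nat set \<Rightarrow> real) set" where
  "Xcvrp n C d p N k = Xsub n \<inter> {x. sum x (delta n {0}) = 2 * real k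
     \<and> (\<forall>S. S \<noteq> {} \<and> S \<subseteq> {1..n} \<longrightarrow>
          sum x (Ein n S) \<le> real (card S) - of_int \<lceil>(\<Sum>v\<in>S. dbar N p d v) / C\<rceil>)}"

definition Xint :: "nat \<Rightarrow> (nat set \<Rightarrow> real) set \<Rightarrow> (nat set \<Rightarrow> real) set" where
  "Xint n X = {x \<in> X. \<forall>e\<in>edges n. x e \<in> \<int>}"

definition is_route :: "nat \<Rightarrow> nat list \<Rightarrow> bool" where
  "is_route n R \<longleftrightarrow> R \<noteq> [] \<and> distinct R \<and> set R \<subseteq> {1..n}"

(* v_i of route R = (v_1,...,v_l), with v_0 = v_{l+1} = 0 *)
definition rv :: "nat list \<Rightarrow> nat \<Rightarrow> nat" where
  "rv R i = (if 1 \<le> i \<and> i \<le> length R then R ! (i - 1) else 0)"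

(* multiplicity of edge e in the cycle 0,v_1,...,v_l,0 *)
definition chi :: "nat list \<Rightarrow> nat set \<Rightarrow> real" where
  "chi R e = real (card {i \<in> {0..length R}. {rv R i, rv R (i + 1)} = e})"

definition encodes :: "nat \<Rightarrow> (nat set \<Rightarrow> real) \<Rightarrow> nat list set \<Rightarrow> bool" where
  "encodes n x Rs \<longleftrightarrow> finite Rs \<and> (\<forall>R\<in>Rs. is_route n R)
     \<and> (\<forall>R\<in>Rs. \<forall>R'\<in>Rs. R \<noteq> R' \<longrightarrow> set R \<inter> set R' = {})
     \<and> (\<Union>R\<in>Rs. set R) = {1..n}
     \<and> (\<forall>e\<in>edges n. x e = (\<Sum>R\<in>Rs. chi R e))"

definition Yxi :: "nat \<Rightarrow> real \<Rightarrow> (nat \<Rightarrow> real) \<Rightarrow> nat list \<Rightarrow> (nat \<Rightarrow> int) set" where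
  "Yxi n C dxi R = {y. (\<forall>v\<in>{1..n}. 0 \<le> y v) \<and>
     (\<exists>(f :: nat \<times> nat \<Rightarrow> real) (g :: nat \<Rightarrow> real).
        (\<forall>a. 0 \<le> f a) \<and> (\<forall>v. 0 \<le> g v)
      \<and> (\<forall>i\<in>{1..length R}. f (rv R (i - 1), rv R i) + dxi (rv R i)
                              = f (rv R i, rv R (i + 1)) + g (rv R i))
      \<and> (\<forall>i\<in>{1..length R + 1}. f (rv R (i - 1), rv R i) \<le> C)
      \<and> (\<forall>i\<in>{1..length R}. g (rv R i) \<le> C * of_int (y (rv R i))))}"

(* Pi(R) = Y^1(R) x ... x Y^N(R); y xi v = y^xi_v *)
definition PiR :: "nat \<Rightarrow> real \<Rightarrow> (nat \<Rightarrow> nat \<Rightarrow> real) \<Rightarrow> nat \<Rightarrow> nat list \<Rightarrow> (nat \<Rightarrow> nat \<Rightarrow> int) set" where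
  "PiR n C d N R = {y. \<forall>\<xi>\<in>{1..N}. y \<xi> \<in> Yxi n C (d \<xi>) R}"

definition Pix :: "nat \<Rightarrow> real \<Rightarrow> (nat \<Rightarrow> nat \<Rightarrow> real) \<Rightarrow> nat \<Rightarrow> nat list set \<Rightarrow> (nat \<Rightarrow> nat \<Rightarrow> int) set" where
  "Pix n C d N Rs = (\<Inter>R\<in>Rs. PiR n C d N R)"

definition boxN :: "nat \<Rightarrow> nat \<Rightarrow> (nat \<Rightarrow> int) \<Rightarrow> (nat \<Rightarrow> nat \<Rightarrow> int) set" where
  "boxN n N b = {y. \<forall>\<xi>\<in>{1..N}. \<forall>v\<in>{1..n}. 0 \<le> y \<xi> v \<and> y \<xi> v \<le> b v}"

end

theory Submission
  imports Defs
begin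

lemma rv_in: "i \<in> {1..length R} \<Longrightarrow> rv R i \<in> set R"
  by (auto simp: rv_def)

lemma Yxi_transfer:
  assumes "y1 \<in> Yxi n C dxi R" "\<forall>v\<in>set R. y2 v = y1 v" "\<forall>v\<in>{1..n}. 0 \<le> y2 v"
  shows "y2 \<in> Yxi n C dxi R"
proof -
  from assms(1) obtain f g where fg: "(\<forall>a. 0 \<le> f a) \<and> (\<forall>v. 0 \<le> g v)
      \<and> (\<forall>i\<in>{1..length R}. f (rv R (i - 1), rv R i) + dxi (rv R i)
                              = f (rv R i, rv R (i + 1)) + g (rv R i))
      \<and> (\<forall>i\<in>{1..length R + 1}. f (rv R (i - 1), rv R i) \<le> C)
      \<and> (\<forall>i\<in>{1..length R}. g (rv R i) \<le> C * of_int (y1 (rv R i)))"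
    unfolding Yxi_def by blast
  have "\<forall>i\<in>{1..length R}. g (rv R i) \<le> C * of_int (y2 (rv R i))"
    using fg assms(2) rv_in by metis
  with fg assms(3) show ?thesis unfolding Yxi_def by blast
qed


theorem proposition1:
  fixes n N :: nat and C :: real
    and d :: "nat \<Rightarrow> nat \<Rightarrow> real" and p :: "nat \<Rightarrow> real"
    and X :: "(nat set \<Rightarrow> real) set"
    and Rof :: "(nat set \<Rightarrow> real) \<Rightarrow> nat list set"
    and Q :: "nat list \<Rightarrow> real" and Qd :: "nat list \<Rightarrow> nat \<Rightarrow> real"
    and w :: "nat \<Rightarrow> real" and b :: "nat \<Rightarrow> int"
  assumes C: "C \<in> \<rat>" "C > 0"
    and d: "\<forall>\<xi>\<in>{1..N}. \<forall>v\<in>{1..n}. d \<xi> v \<in> \<rat> \<and> 0 \<le> d \<xi> v \<and> d \<xi> v \<le> C"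
    and p: "\<forall>\<xi>\<in>{1..N}. p \<xi> \<in> \<rat> \<and> 0 \<le> p \<xi>" "(\<Sum>\<xi>\<in>{1..N}. p \<xi>) = 1"
    and X: "X = Xsub n \<or> (\<exists>k::nat. k > 0 \<and> X = Xcvrp n C d p N k)"
    and Rof: "\<forall>x\<in>Xint n X. encodes n x (Rof x)"
    and Q: "\<forall>R. is_route n R \<longrightarrow> Q R \<in> \<rat> \<and> 0 \<le> Q R"
    and Qd: "\<forall>R. is_route n R \<longrightarrow> Q R = (\<Sum>v\<in>set R. Qd R v)
                 \<and> (\<forall>v. Qd R v \<in> \<rat>) \<and> (\<forall>v. v \<notin> set R \<longrightarrow> Qd R v = 0)"
    and w: "\<forall>v\<in>{1..n}. w v \<in> \<rat> \<and> 0 \<le> w v"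
    and b: "\<forall>v\<in>{1..n}. 0 \<le> b v"
    and ybar: "\<forall>R. is_route n R \<longrightarrow> (\<exists>ybar \<in> PiR n C d N R \<inter> boxN n N b.
                 \<forall>v\<in>set R. Qd R v \<ge> (\<Sum>\<xi>\<in>{1..N}. p \<xi> * w v * of_int (ybar \<xi> v)))"
  shows "\<forall>x \<theta>. (x \<in> Xint n X \<and> (\<forall>v\<in>{1..n}. 0 \<le> \<theta> v)
              \<and> (\<forall>v\<in>{1..n}. \<theta> v \<ge> (\<Sum>R\<in>Rof x. Qd R v)))
          \<longrightarrow> (\<exists>y. y \<in> Pix n C d N (Rof x) \<inter> boxN n N b
                  \<and> (\<forall>v\<in>{1..n}. \<theta> v \<ge> (\<Sum>\<xi>\<in>{1..N}. p \<xi> * w v * of_int (y \<xi> v))))"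
proof (intro allI impI)
  fix x \<theta>
  assume A: "x \<in> Xint n X \<and> (\<forall>v\<in>{1..n}. 0 \<le> \<theta> v)
              \<and> (\<forall>v\<in>{1..n}. \<theta> v \<ge> (\<Sum>R\<in>Rof x. Qd R v))"
  have enc: "encodes n x (Rof x)" using A Rof by blast
  hence fin: "finite (Rof x)" and rt: "\<forall>R\<in>Rof x. is_route n R"
    and disj: "\<forall>R\<in>Rof x. \<forall>R'\<in>Rof x. R \<noteq> R' \<longrightarrow> set R \<inter> set R' = {}"
    and cov: "(\<Union>R\<in>Rof x. set R) = {1..n}"
    unfolding encodes_def by auto
  define sel where "sel R = (SOME yb. yb \<in> PiR n C d N R \<inter> boxN n N b \<and>
                 (\<forall>v\<in>set R. Qd R v \<ge> (\<Sum>\<xi>\<in>{1..N}. p \<xi> * w v * of_int (yb \<xi> v))))" for R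
  have selP: "sel R \<in> PiR n C d N R \<inter> boxN n N b \<and>
                 (\<forall>v\<in>set R. Qd R v \<ge> (\<Sum>\<xi>\<in>{1..N}. p \<xi> * w v * of_int (sel R \<xi> v)))"
    if "R \<in> Rof x" for R
  proof -
    have "is_route n R" using rt that by blast
    then obtain yb where "yb \<in> PiR n C d N R \<inter> boxN n N b \<and>
                 (\<forall>v\<in>set R. Qd R v \<ge> (\<Sum>\<xi>\<in>{1..N}. p \<xi> * w v * of_int (yb \<xi> v)))"
      using ybar by blast
    then show ?thesis unfolding sel_def by (rule someI[where P="\<lambda>yb. yb \<in> PiR n C d N R \<inter> boxN n N b \<and> (\<forall>v\<in>set R. Qd R v \<ge> (\<Sum>\<xi>\<in>{1..N}. p \<xi> * w v * of_int (yb \<xi> v)))"])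
  qed
  define rof where "rof v = (SOME R. R \<in> Rof x \<and> v \<in> set R)" for v
  have rofI: "rof v = R" if "R \<in> Rof x" "v \<in> set R" for R v
  proof -
    have "rof v \<in> Rof x \<and> v \<in> set (rof v)" unfolding rof_def by (rule someI, use that in blast)
    thus ?thesis using disj that by blast
  qed
  have ex: "\<exists>R\<in>Rof x. v \<in> set R" if "v \<in> {1..n}" for v using cov that by blast
  define y where "y \<xi> v = sel (rof v) \<xi> v" for \<xi> v
  have box: "y \<in> boxN n N b"
    unfolding boxN_def
  proof (intro CollectI ballI)
    fix \<xi> v assume h: "\<xi> \<in> {1..N}" "v \<in> {1..n}"
    then obtain R where R: "R \<in> Rof x" "v \<in> set R" using ex by blast
    then show "0 \<le> y \<xi> v \<and> y \<xi> v \<le> b v" using selP[OF R(1)] h rofI[OF R]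
      unfolding y_def boxN_def by auto
  qed
  have pix: "y \<in> Pix n C d N (Rof x)"
    unfolding Pix_def
  proof (intro InterI, clarsimp)
    fix R assume R: "R \<in> Rof x"
    show "y \<in> PiR n C d N R" unfolding PiR_def
    proof (intro CollectI ballI)
      fix \<xi> assume h: "\<xi> \<in> {1..N}"
      have "sel R \<xi> \<in> Yxi n C (d \<xi>) R" using selP[OF R] h unfolding PiR_def by blast
      moreover have "\<forall>v\<in>set R. y \<xi> v = sel R \<xi> v" using rofI[OF R] unfolding y_def by simp
      moreover have "\<forall>v\<in>{1..n}. 0 \<le> y \<xi> v" using box h unfolding boxN_def by blast
      ultimately show "y \<xi> \<in> Yxi n C (d \<xi>) R" by (rule Yxi_transfer)
    qed
  qed
  have th: "\<theta> v \<ge> (\<Sum>\<xi>\<in>{1..N}. p \<xi> * w v * of_int (y \<xi> v))" if v: "v \<in> {1..n}" for v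
  proof -
    obtain R where R: "R \<in> Rof x" "v \<in> set R" using ex v by blast
    have "(\<Sum>R'\<in>Rof x. Qd R' v) = Qd R v + (\<Sum>R'\<in>Rof x - {R}. Qd R' v)"
      using fin R(1) by (simp add: sum.remove)
    also have "(\<Sum>R'\<in>Rof x - {R}. Qd R' v) = 0"
    proof (rule sum.neutral, rule ballI)
      fix R' assume h: "R' \<in> Rof x - {R}"
      then have "v \<notin> set R'" using disj R by blast
      moreover have "is_route n R'" using h rt by blast
      ultimately show "Qd R' v = 0" using Qd by blast
    qed
    finally have "(\<Sum>R'\<in>Rof x. Qd R' v) = Qd R v" by simp
    moreover have "Qd R v \<ge> (\<Sum>\<xi>\<in>{1..N}. p \<xi> * w v * of_int (y \<xi> v))"
      using selP[OF R(1)] R rofI[OF R] unfolding y_def by auto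
    ultimately show ?thesis using A v by (metis order_trans)
  qed
  show "\<exists>y. y \<in> Pix n C d N (Rof x) \<inter> boxN n N b
                  \<and> (\<forall>v\<in>{1..n}. \<theta> v \<ge> (\<Sum>\<xi>\<in>{1..N}. p \<xi> * w v * of_int (y \<xi> v)))"
    using pix box th by blast
qed

end
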